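(* Let $\mathcal{T}$ be a finite forest of binary decision trees over $\mathbb{R}^d$, $b\ge 0$ an integer, and $\mathcal{D}$ a finite nonempty multiset of labelled instances $(\vec{x},y)\in\mathbb{R}^d\times\{-1,+1\}$. Then $$FLB(A_b,\mathcal{D})\ \le\ ELB(A_b,\mathcal{D})\ \le\ Acc_{A_b}(\mathcal{D}),$$ i.e., both quantities defined below are lower bounds on the accuracy of $\mathcal{T}$ under the attacker $A_b$.
   Context: Decision trees: a tree is either a leaf $\lambda(\hat y)$, $\hat y\in\{-1,+1\}$, or an internal node $\sigma(f,v,t_l,t_r)$ (feature $f$, threshold $v\in\mathbb{R}$, subtrees $t_l,t_r$); input $\vec{x}$ goes to $t_l$ if $x_f\le v$, else to $t_r$; $t(\vec{x})$ is the label of the leaf reached, and the traversal path of $\vec{x}$ in $t$ is the sequence of internal nodes visited. Forest prediction: $\mathcal{T}(\vec{x})=+1$ if $\sum_{t\in\mathcal{T}}t(\vec{x})>0$, else $-1$. Attacker: $A_b(\vec{x})=\{\vec{x}'\in\mathbb{R}^d:\|\vec{x}-\vec{x}'\|_0\le b\}$. Accuracy under attack: let $E=\{(\vec{x},y)\in\mathcal{D}: y\,\mathcal{T}(\vec{x})<0\}$, $E'=\{(\vec{x},y)\in\mathcal{D}\setminus E:\exists\vec{x}'\in A_b(\vec{x}),\ y\,\mathcal{T}(\vec{x}')<0\}$, and $Acc_{A_b}(\mathcal{D})=\frac{|\mathcal{D}|-|E\cup E'|}{|\mathcal{D}|}$. Covering sets: for $(\vec{x},y)\in\mathcal{D}$,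 let $\omega(\vec{x},y)=|\{t\in\mathcal{T}:t(\vec{x})\neq y\}|$. For each feature $f$, let $S_f^+$ (resp. $S_f^-$) be the set of trees $t\in\mathcal{T}$ with $t(\vec{x})=y$ whose traversal path of $\vec{x}$ contains a node $\sigma(f,v,\cdot,\cdot)$ with $x_f\le v$ true (resp. false). Call a collection $S'$ of these sets admissible if $|S'|\le b$ and for no $f$ does $S'$ contain both $S_f^+$ and $S_f^-$. FLB: $\overline{S_{FLB}}(\vec{x},y)=\max_{S' \text{ admissible}}\sum_{S_i\in S'}|S_i|$ (equivalently, the sum of sizes of the $b$ largest sets chosen greedily by size, never taking both $S_f^+$ and $S_f^-$ for the same $f$). ELB: $\overline{S_{ELB}}(\vec{x},y)=\max_{S'\text{ admissible}}\big|\bigcup_{S_i\in S'}S_i\big|$. For $X\in\{FLB,ELB\}$ let $E_X=\{(\vec{x},y)\in\mathcal{D}\setminus E:\ \omega(\vec{x},y)+\overline{S_X}(\vec{x},y)\ge|\mathcal{T}|/2\}$ and $X(A_b,\mathcal{D})=\frac{|\mathcal{D}|-|E\cup E_X|}{|\mathcal{D}|}$. *)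

theory Defs
  imports "HOL-Analysis.Analysis" "HOL-Library.Multiset"
begin

datatype 'd dtree = Leaf int | Node 'd real "'d dtree" "'d dtree"

fun leaves_ok :: "'d dtree \<Rightarrow> bool" where
  "leaves_ok (Leaf y) \<longleftrightarrow> y \<in> {-1, 1}"
| "leaves_ok (Node f v l r) \<longleftrightarrow> leaves_ok l \<and> leaves_ok r"

fun tree_pred :: "'d dtree \<Rightarrow> real^'d \<Rightarrow> int" where
  "tree_pred (Leaf y) x = y"
| "tree_pred (Node f v l r) x = (if x $ f \<le> v then tree_pred l x else tree_pred r x)"

fun tree_path :: "'d dtree \<Rightarrow> real^'d \<Rightarrow> ('d \<times> real) list" where
  "tree_path (Leaf y) x = []"
| "tree_path (Node f v l r) x =
     (f, v) # (if x $ f \<le> v then tree_path l x else tree_path r x)"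

text \<open>A forest is a list of trees (duplicates allowed); trees are referred to by index.\<close>
definition forest_pred :: "'d dtree list \<Rightarrow> real^'d \<Rightarrow> int" where
  "forest_pred T x = (if (\<Sum>i<length T. tree_pred (T ! i) x) > 0 then 1 else -1)"

definition attacker :: "nat \<Rightarrow> real^'d \<Rightarrow> (real^'d) set" where
  "attacker b x = {x'. card {f. x $ f \<noteq> x' $ f} \<le> b}"

definition err_set :: "'d dtree list \<Rightarrow> ((real^'d) \<times> int) \<Rightarrow> bool" where
  "err_set T p = (snd p * forest_pred T (fst p) < 0)"

definition attack_set :: "'d dtree list \<Rightarrow> nat \<Rightarrow> ((real^'d) \<times> int) \<Rightarrow> bool" where
  "attack_set T b p = (\<not> err_set T p \<and>
      (\<exists>x'\<in>attacker b (fst p). snd p * forest_pred T x' < 0))"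

definition acc_attack :: "'d dtree list \<Rightarrow> nat \<Rightarrow> ((real^'d) \<times> int) multiset \<Rightarrow> real" where
  "acc_attack T b D =
     (real (size D) - real (size (filter_mset (\<lambda>p. err_set T p \<or> attack_set T b p) D)))
       / real (size D)"

definition omega :: "'d dtree list \<Rightarrow> real^'d \<Rightarrow> int \<Rightarrow> nat" where
  "omega T x y = card {i. i < length T \<and> tree_pred (T ! i) x \<noteq> y}"

text \<open>Covering sets: cover_set T x y (f, True) = S_f^+, cover_set T x y (f, False) = S_f^-
  (as sets of tree indices).\<close>
definition cover_set :: "'d dtree list \<Rightarrow> real^'d \<Rightarrow> int \<Rightarrow> 'd \<times> bool \<Rightarrow> nat set" where
  "cover_set T x y k = {i. i < length T \<and> tree_pred (T ! i) x = y \<and>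
      (\<exists>v. (fst k, v) \<in> set (tree_path (T ! i) x) \<and> (x $ fst k \<le> v) = snd k)}"

text \<open>Admissible collections, given by their index sets.\<close>
definition admissible :: "nat \<Rightarrow> ('d \<times> bool) set \<Rightarrow> bool" where
  "admissible b K = (card K \<le> b \<and> \<not> (\<exists>f. (f, True) \<in> K \<and> (f, False) \<in> K))"

definition S_FLB :: "'d::finite dtree list \<Rightarrow> nat \<Rightarrow> real^'d \<Rightarrow> int \<Rightarrow> nat" where
  "S_FLB T b x y = Max {\<Sum>k\<in>K. card (cover_set T x y k) | K. admissible b K}"

definition S_ELB :: "'d::finite dtree list \<Rightarrow> nat \<Rightarrow> real^'d \<Rightarrow> int \<Rightarrow> nat" where
  "S_ELB T b x y = Max {card (\<Union>k\<in>K. cover_set T x y k) | K. admissible b K}"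

definition bound_acc ::
  "('d::finite dtree list \<Rightarrow> nat \<Rightarrow> real^'d \<Rightarrow> int \<Rightarrow> nat) \<Rightarrow>
   'd dtree list \<Rightarrow> nat \<Rightarrow> ((real^'d) \<times> int) multiset \<Rightarrow> real" where
  "bound_acc S T b D =
     (real (size D) - real (size (filter_mset (\<lambda>(x, y). err_set T (x, y) \<or>
        (\<not> err_set T (x, y) \<and>
         real (omega T x y) + real (S T b x y) \<ge> real (length T) / 2)) D)))
       / real (size D)"

definition FLB :: "'d::finite dtree list \<Rightarrow> nat \<Rightarrow> ((real^'d) \<times> int) multiset \<Rightarrow> real" where
  "FLB T b D = bound_acc S_FLB T b D"

definition ELB :: "'d::finite dtree list \<Rightarrow> nat \<Rightarrow> ((real^'d) \<times> int) multiset \<Rightarrow> real" where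
  "ELB T b D = bound_acc S_ELB T b D"

end

theory Submission
  imports Defs
begin

lemma leaves_pred: "leaves_ok t \<Longrightarrow> tree_pred t x \<in> {-1, 1}"
  by (induction t) auto

lemma path_diff: "tree_pred t x \<noteq> tree_pred t x' \<Longrightarrow>
   \<exists>f v. (f, v) \<in> set (tree_path t x) \<and> (x $ f \<le> v) \<noteq> (x' $ f \<le> v)"
  by (induction t) (auto split: if_splits)

lemma fin_adm: "finite {K :: ('d::finite \<times> bool) set. admissible b K}"
  by simp

lemma elb_le_flb: "S_ELB T b x y \<le> S_FLB T b x y"
proof -
  have fE: "finite {card (\<Union>k\<in>K. cover_set T x y k) | K. admissible b K}"
    using fin_adm by (rule finite_image_set)
  have fF: "finite {\<Sum>k\<in>K. card (cover_set T x y k) | K. admissible b K}"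
    using fin_adm by (rule finite_image_set)
  have ne: "{card (\<Union>k\<in>K. cover_set T x y k) | K. admissible b K} \<noteq> {}"
  proof -
    have "admissible b {}" by (simp add: admissible_def)
    then show ?thesis by blast
  qed
  show ?thesis unfolding S_ELB_def S_FLB_def
  proof (subst Max_le_iff[OF fE ne], clarify)
    fix K :: "('a \<times> bool) set" assume a: "admissible b K"
    have "card (\<Union>k\<in>K. cover_set T x y k) \<le> (\<Sum>k\<in>K. card (cover_set T x y k))"
      by (rule card_UN_le) simp
    also have "\<dots> \<le> Max {\<Sum>k\<in>K. card (cover_set T x y k) | K. admissible b K}"
      using a fF by (intro Max_ge) auto
    finally show "card (\<Union>k\<in>K. cover_set T x y k) \<le> Max {\<Sum>k\<in>K. card (cover_set T x y k) | K. admissible b K}" .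
  qed
qed

lemma attack_bound:
  fixes T :: "'d::finite dtree list"
  assumes lv: "\<forall>t\<in>set T. leaves_ok t" and y: "y \<in> {-1, 1}"
    and x': "x' \<in> attacker b x" and neg: "y * forest_pred T x' < 0"
  shows "real (length T) / 2 \<le> real (omega T x y) + real (S_ELB T b x y)"
proof -
  define n where "n = length T"
  define p where "p i = tree_pred (T ! i) x'" for i
  define W where "W = {i. i < n \<and> p i \<noteq> y}"
  define R where "R = {i. i < n \<and> p i = y}"
  define Wx where "Wx = {i. i < length T \<and> tree_pred (T ! i) x \<noteq> y}"
  define Fl where "Fl = {i. i < n \<and> tree_pred (T ! i) x = y \<and> p i \<noteq> y}"
  define F where "F = {f. x $ f \<noteq> x' $ f}"
  define K where "K = (\<lambda>f. (f, x $ f < x' $ f)) ` F"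
  have pv: "i < n \<Longrightarrow> p i \<in> {-1, 1}" for i
    using lv leaves_pred unfolding p_def n_def by (metis nth_mem)
  have sumeq: "(\<Sum>i<n. y * p i) = (\<Sum>i<n. if p i = y then 1 else -1)"
  proof (rule sum.cong)
    fix i assume "i \<in> {..<n}"
    then have "p i \<in> {-1,1}" using pv by auto
    then show "y * p i = (if p i = y then 1 else -1)" using y by auto
  qed simp
  have "(\<Sum>i<n. if p i = y then 1 else (-1::int)) = int (card R) - int (card W)"
    unfolding sum.If_cases[OF finite_lessThan] R_def W_def
    by (simp add: Int_def lessThan_def conj_commute)
  with sumeq have S: "y * (\<Sum>i<n. p i) = int (card R) - int (card W)"
    by (simp add: sum_distrib_left)
  have cRW: "card R + card W = n"
  proof -
    have "R \<union> W = {..<n}" "R \<inter> W = {}" unfolding R_def W_def by auto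
    then show ?thesis by (metis card_Un_disjoint card_lessThan finite_Un finite_lessThan)
  qed
  have "card R \<le> card W"
  proof (cases "y = 1")
    case True
    with neg have "(\<Sum>i<n. p i) \<le> 0"
      unfolding forest_pred_def p_def n_def by (auto split: if_splits)
    with S True show ?thesis by simp
  next
    case False
    with y have ym: "y = -1" by auto
    with neg have "(\<Sum>i<n. p i) > 0"
      unfolding forest_pred_def p_def n_def by (auto split: if_splits)
    with S ym show ?thesis by simp
  qed
  with cRW have W2: "real n / 2 \<le> real (card W)" by linarith
  have "W \<subseteq> Wx \<union> Fl" unfolding W_def Wx_def Fl_def n_def by auto
  then have "card W \<le> card (Wx \<union> Fl)" by (intro card_mono) (auto simp: Wx_def Fl_def)
  also have "\<dots> \<le> card Wx + card Fl" by (rule card_Un_le)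
  finally have c1: "card W \<le> omega T x y + card Fl" unfolding omega_def Wx_def .
  have FlK: "Fl \<subseteq> (\<Union>k\<in>K. cover_set T x y k)"
  proof
    fix i assume "i \<in> Fl"
    then have i: "i < n" "tree_pred (T ! i) x = y" "p i \<noteq> y" unfolding Fl_def by auto
    then obtain f v where fv: "(f, v) \<in> set (tree_path (T ! i) x)" "(x $ f \<le> v) \<noteq> (x' $ f \<le> v)"
      using path_diff[of "T ! i" x x'] unfolding p_def by auto
    then have fF: "f \<in> F" unfolding F_def by auto
    have "(x $ f \<le> v) = (x $ f < x' $ f)" using fv(2) by auto
    with fv i have "i \<in> cover_set T x y (f, x $ f < x' $ f)"
      unfolding cover_set_def n_def by auto
    with fF show "i \<in> (\<Union>k\<in>K. cover_set T x y k)" unfolding K_def by auto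
  qed
  have adm: "admissible b K"
  proof -
    have "card K \<le> card F" unfolding K_def by (rule card_image_le) simp
    also have "\<dots> \<le> b" using x' unfolding attacker_def F_def by simp
    finally show ?thesis unfolding admissible_def K_def by auto
  qed
  have "card Fl \<le> card (\<Union>k\<in>K. cover_set T x y k)"
    using FlK by (intro card_mono) (auto simp: cover_set_def)
  also have "\<dots> \<le> S_ELB T b x y" unfolding S_ELB_def
    using adm by (intro Max_ge finite_image_set[OF fin_adm]) auto
  finally have "card Fl \<le> S_ELB T b x y" .
  with c1 W2 show ?thesis unfolding n_def by linarith
qed

lemma filter_size_mono:
  assumes "\<forall>p\<in>#D. P p \<longrightarrow> Q p"
  shows "size (filter_mset P D) \<le> size (filter_mset Q D)"
proof -
  have "filter_mset P D = filter_mset P (filter_mset Q D)"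
    using assms by (simp add: filter_filter_mset cong: filter_mset_cong) (metis (mono_tags, lifting) filter_mset_cong)
  also have "size \<dots> \<le> size (filter_mset Q D)"
    by (rule size_mset_mono) (rule multiset_filter_subset)
  finally show ?thesis .
qed

theorem mainTheorem4:
  fixes T :: "'d::finite dtree list" and b :: nat and D :: "((real^'d) \<times> int) multiset"
  assumes "\<forall>t\<in>set T. leaves_ok t"
    and "D \<noteq> {#}"
    and "\<forall>p\<in>#D. snd p \<in> {-1, 1}"
  shows "FLB T b D \<le> ELB T b D \<and> ELB T b D \<le> acc_attack T b D"
proof
  have pos: "real (size D) > 0" using assms(2) by (simp add: nonempty_has_size)
  have m1: "size (filter_mset (\<lambda>(x, y). err_set T (x, y) \<or>
        (\<not> err_set T (x, y) \<and> real (length T) / 2 \<le> real (omega T x y) + real (S_ELB T b x y))) D)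
      \<le> size (filter_mset (\<lambda>(x, y). err_set T (x, y) \<or>
        (\<not> err_set T (x, y) \<and> real (length T) / 2 \<le> real (omega T x y) + real (S_FLB T b x y))) D)"
  proof (rule filter_size_mono, clarify)
    fix x y assume "real (length T) / 2 \<le> real (omega T x y) + real (S_ELB T b x y)"
    moreover have "real (S_ELB T b x y) \<le> real (S_FLB T b x y)" using elb_le_flb by simp
    ultimately show "real (length T) / 2 \<le> real (omega T x y) + real (S_FLB T b x y)" by linarith
  qed
  show "FLB T b D \<le> ELB T b D"
    unfolding FLB_def ELB_def bound_acc_def using m1 pos
    by (intro divide_right_mono) auto
  have m2: "size (filter_mset (\<lambda>p. err_set T p \<or> attack_set T b p) D)
      \<le> size (filter_mset (\<lambda>(x, y). err_set T (x, y) \<or>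
        (\<not> err_set T (x, y) \<and> real (length T) / 2 \<le> real (omega T x y) + real (S_ELB T b x y))) D)"
  proof (rule filter_size_mono, intro ballI impI)
    fix p assume pD: "p \<in># D" and h: "err_set T p \<or> attack_set T b p"
    obtain x y where p: "p = (x, y)" by (cases p)
    show "(\<lambda>(x, y). err_set T (x, y) \<or>
        (\<not> err_set T (x, y) \<and> real (length T) / 2 \<le> real (omega T x y) + real (S_ELB T b x y))) p"
    proof (cases "err_set T (x, y)")
      case False
      with h p obtain x' where "x' \<in> attacker b x" "y * forest_pred T x' < 0"
        unfolding attack_set_def by auto
      moreover have "y \<in> {-1, 1}" using assms(3) pD p by auto
      ultimately show ?thesis using attack_bound[OF assms(1)] p False by auto
    qed (simp add: p)
  qed
  show "ELB T b D \<le> acc_attack T b D"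
    unfolding acc_attack_def ELB_def bound_acc_def using m2 pos
    by (intro divide_right_mono) auto
qed

end
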